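(* Let $\ell\in\{0,1,2,\ldots\}$. As $q\to\infty$, $\tilde\gamma_\ell(q)$ has the asymptotic expansion $$\tilde\gamma_\ell(q)\sim\frac{\log^\ell q}{2q}-\frac{\ell\log^{\ell-1}q-\log^\ell q}{4q^2}+\sum_{k=1}^\infty\frac{E_{2k+1}(0)}{2q^{2k+2}(2k+1)!}\sum_{j=0}^{\ell}\binom{\ell}{j}j!\,s(2k+2,j+1)\log^{\ell-j}q .$$
   Context: For $q>0$, $\zeta_E(z,q)=\sum_{n=0}^\infty (-1)^n (n+q)^{-z}$ for $\mathrm{Re}(z)>0$, extended by analytic continuation to an entire function of $z$. The modified Stieltjes constants $\tilde\gamma_k(q)$ are defined by the Taylor expansion $\zeta_E(z,q)=\sum_{k=0}^\infty\frac{(-1)^k\tilde\gamma_k(q)}{k!}(z-1)^k$. $E_n(x)$ is the $n$-th Euler polynomial, defined by $\frac{2e^{xt}}{e^t+1}=\sum_{n\ge0}E_n(x)\frac{t^n}{n!}$. $s(n,k)$ are the (signed) Stirling numbers of the first kind: $x(x-1)\cdots(x-n+1)=\sum_{k=0}^n s(n,k)x^k$. The symbol $\sim$ means asymptotic expansion in the sense of Poincaré (each truncation has error of the order of the first omitted term) as $q\to\infty$. *)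

theory Defs
  imports "HOL-Complex_Analysis.Complex_Analysis"
          "HOL-Computational_Algebra.Formal_Power_Series"
          "HOL-Computational_Algebra.Polynomial"
          "HOL-Library.Landau_Symbols"
begin

definition zetaE :: "real \<Rightarrow> complex \<Rightarrow> complex" where
  "zetaE q = (THE f. f holomorphic_on UNIV \<and>
      (\<forall>z. 0 < Re z \<longrightarrow>
         (\<lambda>n. (-1) ^ n * (complex_of_real (real n + q)) powr (- z)) sums f z))"

text \<open>Modified Stieltjes constants: zeta_E(z,q) = sum_k (-1)^k gt_k(q)/k! (z-1)^k,
  i.e. gt_k(q) = (-1)^k times the k-th derivative of zeta_E(.,q) at z = 1.\<close>
definition mod_stieltjes :: "nat \<Rightarrow> real \<Rightarrow> complex" where
  "mod_stieltjes k q = (-1) ^ k * (deriv ^^ k) (zetaE q) 1"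

definition euler_poly :: "nat \<Rightarrow> real \<Rightarrow> real" where
  "euler_poly n x = fact n * fps_nth (fps_const 2 * fps_exp x * inverse (fps_exp 1 + 1)) n"

definition stirling1s :: "nat \<Rightarrow> nat \<Rightarrow> int" where
  "stirling1s n k = coeff (\<Prod>i<n. [:- int i, 1:]) k"

end

theory Submission
  imports Defs
begin


definition eG :: "real fps" where "eG = fps_const 2 * inverse (fps_exp 1 + 1)"
definition eu :: "nat \<Rightarrow> real" where "eu n = fact n * (eG $ n)"

lemma euler_poly_0: "euler_poly n 0 = eu n"
  by (simp add: euler_poly_def eu_def eG_def)

lemma eG_mult: "eG * (fps_exp 1 + 1) = 2"
proof -
  have "(fps_exp 1 + 1 :: real fps) $ 0 \<noteq> 0" by simp
  then have "inverse (fps_exp 1 + 1) * (fps_exp 1 + 1 :: real fps) = 1" by (rule inverse_mult_eq_1)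
  then show ?thesis unfolding eG_def
    by (metis mult.assoc mult.right_neutral numeral_fps_const)
qed

lemma eG_0: "eG $ 0 = 1"
  by (simp add: eG_def)

lemma eu_rec: "(\<Sum>k\<le>n. real (n choose k) * eu k) + eu n = (if n = 0 then 2 else 0)"
proof -
  have "(eG * (fps_exp 1 + 1)) $ n = (2::real fps) $ n" by (simp add: eG_mult)
  then have "(\<Sum>i=0..n. eG$i * (1 / fact (n - i) + (if n - i = 0 then 1 else 0))) = (if n = 0 then 2 else 0)"
    by (simp add: fps_mult_nth numeral_fps_const)
  also have "(\<Sum>i=0..n. eG$i * (1 / fact (n - i) + (if n - i = 0 then 1 else 0)))
      = (\<Sum>i=0..n. eG$i / fact (n - i)) + eG $ n"
  proof -
    have "(\<Sum>i=0..n. eG$i * (1 / fact (n - i) + (if n - i = 0 then 1 else 0)))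
       = (\<Sum>i=0..n. eG$i / fact (n - i)) + (\<Sum>i=0..n. (if i = n then eG $ i else 0))"
      unfolding sum.distrib[symmetric] by (rule sum.cong) (auto simp: algebra_simps)
    also have "(\<Sum>i=0..n. (if i = n then eG $ i else 0)) = eG $ n"
      by (simp add: sum.delta')
    finally show ?thesis .
  qed
  finally have A: "(\<Sum>i=0..n. eG$i / fact (n - i)) + eG $ n = (if n = 0 then 2 else 0)" .
  have "fact n * ((\<Sum>i=0..n. eG$i / fact (n - i)) + eG $ n) = (\<Sum>k\<le>n. real (n choose k) * eu k) + eu n"
  proof -
    have "fact n * (\<Sum>i=0..n. eG$i / fact (n - i)) = (\<Sum>k\<le>n. real (n choose k) * eu k)"
      unfolding sum_distrib_left atMost_atLeast0
    proof (rule sum.cong[OF refl])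
      fix k assume "k \<in> {0..n}"
      then have kn: "k \<le> n" by simp
      show "fact n * (eG $ k / fact (n - k)) = real (n choose k) * eu k"
        using binomial_fact[OF kn, where 'a=real] unfolding eu_def
        by (simp add: field_simps)
    qed
    then show ?thesis by (simp add: distrib_left eu_def)
  qed
  with A have "(\<Sum>k\<le>n. real (n choose k) * eu k) + eu n = fact n * (if n = 0 then 2 else 0)" by simp
  then show ?thesis by (cases "n = 0") auto
qed

lemma eG_deriv: "fps_deriv eG = fps_const (1/2) * eG * eG - eG"
proof -
  let ?E = "fps_exp 1 + 1 :: real fps"
  have d: "fps_deriv eG * ?E + eG * fps_exp 1 = 0"
    using arg_cong[OF eG_mult, of fps_deriv] by (simp add: add.commute)
  have "(fps_deriv eG - (fps_const (1/2) * eG * eG - eG)) * ?E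
      = fps_deriv eG * ?E - fps_const (1/2) * eG * (eG * ?E) + eG * ?E"
    by (simp add: algebra_simps)
  also have "\<dots> = fps_deriv eG * ?E - fps_const (1/2) * eG * 2 + eG * ?E"
    by (simp add: eG_mult)
  also have "\<dots> = fps_deriv eG * ?E + eG * fps_exp 1"
    by (simp add: algebra_simps numeral_fps_const fps_const_mult[symmetric] del: fps_const_mult)
  also have "\<dots> = 0" by (rule d)
  finally have "(fps_deriv eG - (fps_const (1/2) * eG * eG - eG)) * ?E = 0" .
  moreover have "?E \<noteq> 0"
  proof
    assume "?E = 0" then have "?E $ 0 = 0" by simp
    then show False by simp
  qed
  ultimately show ?thesis by simp
qed

lemma eG_rec: "real (Suc n) * eG $ Suc n = (1/2) * (\<Sum>i=0..n. eG$i * eG$(n-i)) - eG $ n"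
proof -
  have "fps_deriv eG $ n = (fps_const (1/2) * eG * eG - eG) $ n" by (simp only: eG_deriv)
  also have "(fps_const (1/2) * eG * eG - eG) $ n = (1/2) * (eG * eG) $ n - eG $ n"
    by (simp only: mult.assoc fps_mult_left_const_nth fps_sub_nth)
  finally show ?thesis
    by (simp add: fps_mult_nth)
qed

lemma eG_1: "eG $ 1 = -1/2"
  using eG_rec[of 0] by (simp add: eG_0)

lemma sum_ends:
  assumes "1 \<le> (m::nat)"
  shows "(\<Sum>i=0..m. f i) = f 0 + f m + (\<Sum>i\<in>{1..<m}. f i)"
proof -
  have "{0..m} = insert 0 (insert m {1..<m})" using assms by auto
  then show ?thesis using assms by (simp add: add.assoc)
qed

lemma eG_parity:
  "(1 \<le> n \<and> even n \<longrightarrow> eG $ n = 0) \<and> (odd n \<longrightarrow> (-1) ^ (n div 2) * eG $ n < 0)"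
proof (induction n rule: less_induct)
  case (less n)
  show ?case
  proof (cases n)
    case 0 then show ?thesis by simp
  next
    case (Suc m)
    note IH = less[unfolded Suc]
    show ?thesis
    proof (cases "even m")
      case False
      then have m1: "1 \<le> m" by (cases m) auto
      have "(\<Sum>i=0..m. eG$i * eG$(m-i)) = eG$0 * eG$m + eG$m * eG$0 + (\<Sum>i\<in>{1..<m}. eG$i * eG$(m-i))"
        using sum_ends[OF m1, of "\<lambda>i. eG$i * eG$(m-i)"] by simp
      also have "(\<Sum>i\<in>{1..<m}. eG$i * eG$(m-i)) = 0"
      proof (rule sum.neutral, intro ballI)
        fix i assume i: "i \<in> {1..<m}"
        show "eG$i * eG$(m-i) = 0"
        proof (cases "even i")
          case True then show ?thesis using IH[of i] i by auto
        next
          case False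
          then have e: "even (m - i)" using \<open>odd m\<close> i by (auto simp: even_diff_nat)
          have "m - i < Suc m" "1 \<le> m - i" using i by auto
          then have "eG $ (m - i) = 0" using IH[of "m-i"] e by blast
          then show ?thesis by simp
        qed
      qed
      finally have "(\<Sum>i=0..m. eG$i * eG$(m-i)) = 2 * eG $ m" by (simp add: eG_0)
      then have "real (Suc m) * eG $ Suc m = 0" using eG_rec[of m] by simp
      then have "eG $ Suc m = 0" by simp
      then show ?thesis using Suc False by simp
    next
      case True
      show ?thesis
      proof (cases "m = 0")
        case True then show ?thesis using Suc eG_1 by simp
      next
        case False
        obtain k where k: "m = 2 * k" using \<open>even m\<close> by auto
        with False have k1: "1 \<le> k" by simp
        have gm: "eG $ m = 0" using IH[of m] \<open>even m\<close> False by simp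
        let ?S = "(\<Sum>i=0..m. eG$i * eG$(m-i))"
        have h1: "0 < (-1)^(k-1) * ?S"
          unfolding sum_distrib_left
        proof (rule sum_pos2[where i=1])
          show "finite {0..m}" by simp
          show "1 \<in> {0..m}" using k1 k by simp
          have "odd (m - 1)" using k k1 by simp
          then have "(-1) ^ ((m-1) div 2) * eG $ (m-1) < 0" using IH[of "m-1"] k k1 by simp
          moreover have "(m-1) div 2 = k - 1" using k k1 by simp
          ultimately show "0 < (-1)^(k-1) * (eG $ 1 * eG $ (m - 1))" using eG_1
            by (simp add: mult_neg_neg)
          show "0 \<le> (-1)^(k-1) * (eG $ i * eG $ (m - i))" if i: "i \<in> {0..m}" for i
          proof -
            show "0 \<le> (-1)^(k-1) * (eG $ i * eG $ (m - i))"
            proof (cases "even i")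
              case True
              then have "eG $ i * eG $ (m - i) = 0"
                using IH[of i] i gm by (cases "i = 0") auto
              then show ?thesis by (simp only: mult_zero_right order.refl)
            next
              case False
              then have oi: "odd (m - i)" using k i by auto
              have a: "(-1) ^ (i div 2) * eG $ i < 0" using IH[of i] i False by auto
              have b: "(-1) ^ ((m-i) div 2) * eG $ (m-i) < 0" using IH[of "m-i"] i oi by auto
              obtain a where ia: "i = 2 * a + 1" using False by (metis oddE)
              obtain b where ib: "m - i = 2 * b + 1" using oi by (metis oddE)
              have e: "i div 2 + (m - i) div 2 = k - 1" using ia ib k i by simp
              have eq: "(-1)^(k-1) * (eG $ i * eG $ (m - i)) = ((-1) ^ (i div 2) * eG $ i) * ((-1) ^ ((m-i) div 2) * eG $ (m-i))"
                unfolding e[symmetric] power_add by (simp only: ac_simps)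
              show ?thesis unfolding eq using mult_neg_neg[OF a b] by (rule less_imp_le)
            qed
          qed
        qed
        have h2: "real (Suc m) * eG $ Suc m = (1/2) * ?S" using eG_rec[of m] gm by simp
        have h3: "(-1) ^ (Suc m div 2) = - ((-1)^(k-1) :: real)"
        proof -
          obtain j where "k = Suc j" using k1 by (cases k) auto
          then show ?thesis using k by simp
        qed
        have "?S = 2 * real (Suc m) * eG $ Suc m" using h2 by (simp add: algebra_simps)
        then have "0 < ((-1)^(k-1) * eG $ Suc m) * (2 * real (Suc m))" using h1 by (simp add: ac_simps)
        then have "0 < (-1)^(k-1) * eG $ Suc m" by (simp add: zero_less_mult_iff)
        then have "(-1) ^ (Suc m div 2) * eG $ Suc m < 0" using h3 by simp
        then show ?thesis using Suc True by simp
      qed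
    qed
  qed
qed

lemma eu_0: "eu 0 = 1" by (simp add: eu_def eG_0)
lemma eu_1: "eu 1 = -1/2" using eG_1 by (simp add: eu_def)
lemma eu_even: "1 \<le> n \<Longrightarrow> even n \<Longrightarrow> eu n = 0"
  using eG_parity[of n] by (simp add: eu_def)
lemma eu_odd_nz: "odd n \<Longrightarrow> eu n \<noteq> 0"
  using eG_parity[of n] by (auto simp: eu_def)



lemma stir_0: "stirling1s 0 k = (if k = 0 then 1 else 0)"
  by (simp add: stirling1s_def)

lemma stir_Suc: "stirling1s (Suc n) k = (if k = 0 then 0 else stirling1s n (k - 1)) - int n * stirling1s n k"
proof -
  have "(\<Prod>i<Suc n. [:- int i, 1:]) = (\<Prod>i<n. [:- int i, 1:]) * [:- int n, 1:]"
    by simp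
  then show ?thesis unfolding stirling1s_def
    by (simp add: coeff_pCons' algebra_simps)
qed

lemma stir_Suc_0: "stirling1s (Suc n) 0 = 0"
  by (induction n) (simp_all add: stir_Suc stir_0)

definition Dk :: "nat \<Rightarrow> complex \<Rightarrow> complex" where
  "Dk k z = (\<Prod>i<k. (- z - of_nat i))"

definition Qk :: "nat \<Rightarrow> complex poly" where
  "Qk k = (\<Prod>i<k. [:- (1 + of_nat i), -1:])"

lemma Dk_Qk: "Dk k z = poly (Qk k) (z - 1)"
  by (induction k) (simp_all add: Dk_def Qk_def algebra_simps)

lemma coeff_Qk: "coeff (Qk k) j = (-1) ^ j * of_int (stirling1s (Suc k) (Suc j))"
proof (induction k arbitrary: j)
  case 0
  then show ?case by (simp add: Qk_def stir_Suc stir_0)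
next
  case (Suc k)
  have "Qk (Suc k) = Qk k * [:- (1 + of_nat k), -1:]" by (simp add: Qk_def)
  then have "coeff (Qk (Suc k)) j = - (1 + of_nat k) * coeff (Qk k) j - (if j = 0 then 0 else coeff (Qk k) (j - 1))"
    by (simp add: coeff_pCons' algebra_simps)
  also have "\<dots> = (-1) ^ j * of_int (stirling1s (Suc (Suc k)) (Suc j))"
  proof (cases j)
    case 0 then show ?thesis by (simp add: Suc.IH stir_Suc[of "Suc k"] stir_Suc_0 algebra_simps)
  next
    case (Suc j') then show ?thesis by (simp add: Suc.IH stir_Suc[of "Suc k"] algebra_simps)
  qed
  finally show ?case .
qed

lemma higher_deriv_poly_shift:
  "(deriv ^^ j) (\<lambda>z. poly p (z - c)) = (\<lambda>z. poly ((pderiv ^^ j) p) (z - (c::complex)))"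
proof (induction j)
  case 0 then show ?case by simp
next
  case (Suc j)
  show ?case
  proof
    fix z
    have "((\<lambda>z. poly ((pderiv ^^ j) p) (z - c)) has_field_derivative poly (pderiv ((pderiv ^^ j) p)) (z - c)) (at z)"
      using DERIV_chain2[OF poly_DERIV, of "\<lambda>z. z - c" 1 z] by (auto intro!: derivative_eq_intros)
    then show "(deriv ^^ Suc j) (\<lambda>z. poly p (z - c)) z = poly ((pderiv ^^ Suc j) p) (z - c)"
      by (simp add: Suc.IH DERIV_imp_deriv)
  qed
qed

lemma higher_deriv_Dk: "(deriv ^^ j) (Dk k) 1 = fact j * (-1) ^ j * of_int (stirling1s (Suc k) (Suc j))"
proof -
  have "Dk k = (\<lambda>z. poly (Qk k) (z - 1))" by (simp add: Dk_Qk fun_eq_iff)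
  then have "(deriv ^^ j) (Dk k) 1 = poly ((pderiv ^^ j) (Qk k)) 0"
    by (simp add: higher_deriv_poly_shift)
  also have "\<dots> = pochhammer 1 j * coeff (Qk k) j"
    by (simp add: poly_0_coeff_0 coeff_higher_pderiv)
  finally show ?thesis by (simp add: coeff_Qk pochhammer_fact)
qed

lemma higher_deriv_exp_lin:
  "(deriv ^^ j) (\<lambda>z. exp (a * z + b)) = (\<lambda>z. a ^ j * exp (a * z + (b::complex)))"
proof (induction j)
  case 0 then show ?case by simp
next
  case (Suc j)
  show ?case
  proof
    fix z
    have "((\<lambda>z. a ^ j * exp (a * z + b)) has_field_derivative a ^ j * (exp (a * z + b) * a)) (at z)"
      by (auto intro!: derivative_eq_intros)
    then have "deriv (\<lambda>z. a ^ j * exp (a * z + b)) z = a ^ j * (exp (a * z + b) * a)"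
      by (rule DERIV_imp_deriv)
    then show "(deriv ^^ Suc j) (\<lambda>z. exp (a * z + b)) z = a ^ Suc j * exp (a * z + b)"
      by (simp only: funpow.simps comp_def Suc.IH) (simp add: algebra_simps)
  qed
qed

definition Ak :: "real \<Rightarrow> nat \<Rightarrow> complex \<Rightarrow> complex" where
  "Ak q k z = Dk k z * of_real q powr (- z - of_nat k)"

lemma Dk_holo: "Dk k holomorphic_on S"
  unfolding Dk_def by (intro holomorphic_intros)

lemma Ak_exp: "q > 0 \<Longrightarrow> Ak q k = (\<lambda>z. Dk k z * exp ((- of_real (ln q)) * z + (- of_nat k * of_real (ln q))))"
  by (auto simp: Ak_def powr_def fun_eq_iff Ln_of_real algebra_simps)

lemma Ak_holo: "q > 0 \<Longrightarrow> Ak q k holomorphic_on S"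
  unfolding Ak_exp by (intro holomorphic_intros Dk_holo)

lemma higher_deriv_Ak:
  assumes q: "q > 0"
  shows "(-1) ^ l * (deriv ^^ l) (Ak q k) 1 =
    of_real (q powr (- real k - 1) * (\<Sum>j=0..l. real (l choose j) * fact j * real_of_int (stirling1s (Suc k) (Suc j)) * ln q ^ (l - j)))"
proof -
  define L where "L = (of_real (ln q) :: complex)"
  have "(deriv ^^ l) (Ak q k) 1 = (\<Sum>i = 0..l. of_nat (l choose i) * (deriv ^^ i) (Dk k) 1 *
       (deriv ^^ (l - i)) (\<lambda>z. exp ((- L) * z + (- of_nat k * L))) 1)"
    unfolding Ak_exp[OF q] L_def
    by (rule higher_deriv_mult[of _ UNIV]) (auto intro!: holomorphic_intros Dk_holo)
  also have "\<dots> = (\<Sum>i = 0..l. of_nat (l choose i) * (fact i * (-1) ^ i * of_int (stirling1s (Suc k) (Suc i))) *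
       ((- L) ^ (l - i) * exp (- L - of_nat k * L)))"
    by (simp only: higher_deriv_Dk higher_deriv_exp_lin) (simp add: algebra_simps)
  finally have "(-1) ^ l * (deriv ^^ l) (Ak q k) 1 = (\<Sum>i = 0..l. (-1) ^ l * (of_nat (l choose i) * (fact i * (-1) ^ i * of_int (stirling1s (Suc k) (Suc i))) *
       ((- L) ^ (l - i) * exp (- L - of_nat k * L))))"
    by (simp add: sum_distrib_left)
  also have "\<dots> = (\<Sum>i = 0..l. exp (- L - of_nat k * L) * of_real (real (l choose i) * fact i * real_of_int (stirling1s (Suc k) (Suc i)) * ln q ^ (l - i)))"
  proof (rule sum.cong[OF refl])
    fix i assume "i \<in> {0..l}"
    then have il: "i \<le> l" by simp
    have "(-1) ^ l * (-1) ^ i * (- L) ^ (l - i) = (L ^ (l - i) :: complex)"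
    proof -
      have "(-1) ^ l * (-1) ^ i * (- L) ^ (l - i) = (-1) ^ (l + i + (l - i)) * L ^ (l - i)"
        by (simp add: power_add power_minus[of L] algebra_simps)
      also have "l + i + (l - i) = 2 * l" using il by simp
      finally show ?thesis by simp
    qed
    then show "(-1) ^ l * (of_nat (l choose i) * (fact i * (-1) ^ i * of_int (stirling1s (Suc k) (Suc i))) *
       ((- L) ^ (l - i) * exp (- L - of_nat k * L))) =
       exp (- L - of_nat k * L) * of_real (real (l choose i) * fact i * real_of_int (stirling1s (Suc k) (Suc i)) * ln q ^ (l - i))"
      unfolding L_def by (simp add: algebra_simps)
  qed
  also have "exp (- L - of_nat k * L) = of_real (q powr (- real k - 1))"
    using q by (simp add: L_def powr_def exp_of_real[symmetric] algebra_simps) (rule arg_cong[where f=exp], algebra)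
  finally show ?thesis by (simp add: sum_distrib_left)
qed



definition ph :: "real \<Rightarrow> nat \<Rightarrow> complex \<Rightarrow> real \<Rightarrow> complex" where
  "ph q k z x = Dk k z * of_real (x + q) powr (- z - of_nat k)"

definition Pe :: "nat \<Rightarrow> real \<Rightarrow> real" where
  "Pe k t = (\<Sum>i\<le>k. real (k choose i) * eu i * t ^ (k - i))"

lemma Pe_0: "Pe 0 t = 1" by (simp add: Pe_def eu_0)
lemma Pe_at0: "Pe k 0 = eu k"
proof -
  have "Pe k 0 = (\<Sum>i\<le>k. (if i = k then eu i else 0))"
    unfolding Pe_def by (rule sum.cong) auto
  then show ?thesis by simp
qed
lemma Pe_at1: "k \<ge> 1 \<Longrightarrow> Pe k 1 = - eu k"
  using eu_rec[of k] by (simp add: Pe_def)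

lemma Pe_deriv: "(Pe (Suc k) has_real_derivative (real (Suc k) * Pe k t)) (at t within S)"
proof -
  have "((\<lambda>t. \<Sum>i\<le>Suc k. real (Suc k choose i) * eu i * t ^ (Suc k - i)) has_real_derivative
      (\<Sum>i\<le>Suc k. real (Suc k choose i) * eu i * (real (Suc k - i) * t ^ (Suc k - i - Suc 0)))) (at t within S)"
    by (intro DERIV_sum DERIV_cmult DERIV_pow)
  moreover have "(\<Sum>i\<le>Suc k. real (Suc k choose i) * eu i * (real (Suc k - i) * t ^ (Suc k - i - Suc 0)))
      = real (Suc k) * Pe k t"
  proof -
    have "(\<Sum>i\<le>Suc k. real (Suc k choose i) * eu i * (real (Suc k - i) * t ^ (Suc k - i - Suc 0)))
      = (\<Sum>i\<le>k. real (Suc k choose i) * eu i * (real (Suc k - i) * t ^ (Suc k - i - Suc 0)))"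
      by simp
    also have "\<dots> = (\<Sum>i\<le>k. real (Suc k) * (real (k choose i) * eu i * t ^ (k - i)))"
    proof (rule sum.cong[OF refl])
      fix i assume "i \<in> {..k}"
      have "real (Suc k - i) * real (Suc k choose i) = real (Suc k) * real (k choose i)"
        using binomial_absorb_comp[of "Suc k" i] by (metis diff_Suc_1 of_nat_mult)
      moreover have "Suc k - i - Suc 0 = k - i" by simp
      ultimately show "real (Suc k choose i) * eu i * (real (Suc k - i) * t ^ (Suc k - i - Suc 0)) =
          real (Suc k) * (real (k choose i) * eu i * t ^ (k - i))"
        by (metis (no_types, lifting) mult.assoc mult.commute mult.left_commute)
    qed
    finally show ?thesis by (simp add: Pe_def sum_distrib_left)
  qed
  ultimately show ?thesis unfolding Pe_def by simp
qed

lemma Dk_Suc: "Dk (Suc k) z = Dk k z * (- z - of_nat k)"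
  by (simp add: Dk_def)

lemma ph_deriv:
  assumes "x + q > 0"
  shows "((\<lambda>x. ph q k z x) has_vector_derivative ph q (Suc k) z x) (at x within S)"
proof -
  let ?w = "- z - of_nat k"
  have nz: "complex_of_real x + complex_of_real q \<notin> \<real>\<^sub>\<le>\<^sub>0"
    using assms by (metis complex_nonpos_Reals_iff Re_complex_of_real not_le of_real_add)
  have d: "((\<lambda>u. u powr ?w) has_field_derivative (?w * (of_real x + of_real q) powr (?w - 1))) (at (of_real x + of_real q))"
    by (rule has_field_derivative_powr[OF nz])
  have e: "((\<lambda>u. u + of_real q) has_field_derivative 1) (at (of_real x))"
    by (auto intro!: derivative_eq_intros)
  have "((\<lambda>u. Dk k z * (u + of_real q) powr ?w) has_field_derivative
        Dk k z * (?w * (of_real x + of_real q) powr (?w - 1) * 1)) (at (of_real x))"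
    by (rule DERIV_cmult) (rule DERIV_chain2[OF d e])
  then have "((\<lambda>x. Dk k z * (of_real x + of_real q) powr ?w) has_vector_derivative
        Dk k z * (?w * (of_real x + of_real q) powr (?w - 1) * 1)) (at x within S)"
    by (rule has_vector_derivative_real_field)
  moreover have "Dk k z * (?w * (of_real x + of_real q) powr (?w - 1) * 1) = ph q (Suc k) z x"
    by (simp add: ph_def Dk_Suc algebra_simps)
  ultimately show ?thesis by (simp add: ph_def)
qed

fun Cf :: "real \<Rightarrow> nat \<Rightarrow> complex \<Rightarrow> nat \<Rightarrow> complex" where
  "Cf q 0 z n = ph q 0 z (real n + 1) - ph q 0 z (real n)"
| "Cf q (Suc k) z n = - of_real (eu (Suc k) / fact (Suc k)) * (ph q (Suc k) z (real n + 1) + ph q (Suc k) z (real n))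
      - Cf q k z n"

lemma shift_vd:
  assumes "(f has_vector_derivative f') (at (c + t))"
  shows "((\<lambda>t. f (c + t)) has_vector_derivative f') (at (t::real))"
proof -
  have "((\<lambda>t. c + t) has_vector_derivative 1) (at t)" by (auto intro!: derivative_eq_intros)
  from vector_diff_chain_at[OF this assms] show ?thesis by (simp add: o_def)
qed

lemma Cf_integral:
  assumes q: "q > 0"
  shows "((\<lambda>t. of_real (Pe k t / fact k) * ph q (Suc k) z (real n + t)) has_integral Cf q k z n) {0..1}"
proof (induction k)
  case 0
  have "((\<lambda>t. ph q (Suc 0) z (real n + t)) has_integral (ph q 0 z (real n + 1) - ph q 0 z (real n + 0))) {0..1}"
  proof (rule fundamental_theorem_of_calculus)
    fix t :: real assume "t \<in> {0..1}"
    then have pos: "real n + t + q > 0" using q by simp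
    have "((\<lambda>x. ph q 0 z x) has_vector_derivative ph q (Suc 0) z (real n + t)) (at (real n + t))"
      by (rule ph_deriv[OF pos])
    then have "((\<lambda>t. ph q 0 z (real n + t)) has_vector_derivative ph q (Suc 0) z (real n + t)) (at t)"
      by (rule shift_vd)
    then show "((\<lambda>t. ph q 0 z (real n + t)) has_vector_derivative ph q (Suc 0) z (real n + t)) (at t within {0..1})"
      by (rule has_vector_derivative_at_within)
  qed simp
  then show ?case by (simp add: Pe_0)
next
  case (Suc k)
  let ?g = "\<lambda>t. of_real (Pe (Suc k) t / fact (Suc k)) * ph q (Suc k) z (real n + t)"
  have "((\<lambda>t. of_real (Pe k t / fact k) * ph q (Suc k) z (real n + t) + of_real (Pe (Suc k) t / fact (Suc k)) * ph q (Suc (Suc k)) z (real n + t))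
      has_integral (?g 1 - ?g 0)) {0..1}"
  proof (rule fundamental_theorem_of_calculus)
    fix t :: real assume "t \<in> {0..1}"
    then have pos: "real n + t + q > 0" using q by simp
    have d1: "((\<lambda>t. ph q (Suc k) z (real n + t)) has_vector_derivative ph q (Suc (Suc k)) z (real n + t)) (at t)"
      by (rule shift_vd[OF ph_deriv[OF pos]])
    have d2: "((\<lambda>t. Pe (Suc k) t / fact (Suc k)) has_real_derivative (real (Suc k) * Pe k t / fact (Suc k))) (at t)"
      using Pe_deriv[of k t UNIV] by (auto intro!: derivative_eq_intros)
    have "(?g has_vector_derivative (of_real (Pe (Suc k) t / fact (Suc k)) * ph q (Suc (Suc k)) z (real n + t)
         + of_real (real (Suc k) * Pe k t / fact (Suc k)) * ph q (Suc k) z (real n + t))) (at t)"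
      by (rule has_vector_derivative_mult[OF has_vector_derivative_of_real[OF d2] d1])
    moreover have "real (Suc k) * Pe k t / fact (Suc k) = Pe k t / fact k"
    proof -
      have f: "fact (Suc k) = real (Suc k) * (fact k :: real)" by (simp only: fact_Suc of_nat_mult)
      show ?thesis unfolding f by (rule nonzero_mult_divide_mult_cancel_left) simp
    qed
    ultimately show "(?g has_vector_derivative (of_real (Pe k t / fact k) * ph q (Suc k) z (real n + t) + of_real (Pe (Suc k) t / fact (Suc k)) * ph q (Suc (Suc k)) z (real n + t))) (at t within {0..1})"
      by (auto intro: has_vector_derivative_at_within simp: add.commute)
  qed simp
  from has_integral_diff[OF this Suc.IH]
  have "((\<lambda>t. of_real (Pe (Suc k) t / fact (Suc k)) * ph q (Suc (Suc k)) z (real n + t))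
      has_integral (?g 1 - ?g 0 - Cf q k z n)) {0..1}"
    by (simp only: add_diff_cancel_left' add_0_right)
  moreover have "?g 1 - ?g 0 - Cf q k z n = Cf q (Suc k) z n"
    by (simp add: Pe_at1 Pe_at0 algebra_simps)
  ultimately show ?case by simp
qed



lemma norm_ph:
  assumes "x + q > 0"
  shows "norm (ph q k z x) = norm (Dk k z) * (x + q) powr (- (Re z + real k))"
proof -
  have "norm (complex_of_real (x + q) powr (- z - of_nat k)) = Re (complex_of_real (x + q)) powr Re (- z - of_nat k)"
    by (rule norm_powr_real_powr) (use assms in auto)
  then show ?thesis by (simp add: ph_def norm_mult)
qed

definition PB :: "nat \<Rightarrow> real" where "PB k = (\<Sum>i\<le>k. real (k choose i) * \<bar>eu i\<bar>)"

lemma Pe_bound: "t \<in> {0..1} \<Longrightarrow> \<bar>Pe k t\<bar> \<le> PB k"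
  unfolding Pe_def PB_def
proof -
  assume t: "t \<in> {0..1}"
  have "\<bar>\<Sum>i\<le>k. real (k choose i) * eu i * t ^ (k - i)\<bar> \<le> (\<Sum>i\<le>k. \<bar>real (k choose i) * eu i * t ^ (k - i)\<bar>)"
    by (rule sum_abs)
  also have "\<dots> \<le> (\<Sum>i\<le>k. real (k choose i) * \<bar>eu i\<bar>)"
  proof (rule sum_mono)
    fix i assume "i \<in> {..k}"
    have "\<bar>t ^ (k - i)\<bar> \<le> 1" using t by (simp add: power_le_one)
    then show "\<bar>real (k choose i) * eu i * t ^ (k - i)\<bar> \<le> real (k choose i) * \<bar>eu i\<bar>"
      by (simp add: abs_mult mult_left_le)
  qed
  finally show "\<bar>\<Sum>i\<le>k. real (k choose i) * eu i * t ^ (k - i)\<bar> \<le> (\<Sum>i\<le>k. real (k choose i) * \<bar>eu i\<bar>)" .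
qed

lemma PB_pos: "PB k > 0"
proof -
  have "0 < real (k choose 0) * \<bar>eu 0\<bar>" by (simp add: eu_0)
  also have "\<dots> \<le> PB k" unfolding PB_def
    by (rule member_le_sum) auto
  finally show ?thesis .
qed

lemma Cf_bound:
  assumes q: "q > 0" and s: "Re z + real k + 1 \<ge> 0"
  shows "norm (Cf q k z n) \<le> PB k / fact k * norm (Dk (Suc k) z) * (real n + q) powr (- (Re z + real k + 1))"
proof -
  have "norm (Cf q k z n) \<le> PB k / fact k * norm (Dk (Suc k) z) * (real n + q) powr (- (Re z + real k + 1)) * Henstock_Kurzweil_Integration.content (cbox (0::real) 1)"
  proof (rule has_integral_bound)
    show "0 \<le> PB k / fact k * norm (Dk (Suc k) z) * (real n + q) powr (- (Re z + real k + 1))"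
      using PB_pos[of k] by simp
    show "((\<lambda>t. of_real (Pe k t / fact k) * ph q (Suc k) z (real n + t)) has_integral Cf q k z n) (cbox 0 1)"
      using Cf_integral[OF q] by simp
    fix t :: real assume "t \<in> cbox 0 1"
    then have t: "t \<in> {0..1}" by simp
    have "norm (of_real (Pe k t / fact k) * ph q (Suc k) z (real n + t))
        = \<bar>Pe k t\<bar> / fact k * (norm (Dk (Suc k) z) * (real n + t + q) powr (- (Re z + real (Suc k))))"
      using t q by (simp add: norm_mult norm_ph norm_divide)
    also have "\<dots> \<le> PB k / fact k * (norm (Dk (Suc k) z) * (real n + q) powr (- (Re z + real k + 1)))"
    proof (intro mult_mono divide_right_mono Pe_bound[OF t] mult_left_mono)
      show "(real n + t + q) powr (- (Re z + real (Suc k))) \<le> (real n + q) powr (- (Re z + real k + 1))"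
        using powr_mono2'[of "- (Re z + real k + 1)" "real n + q" "real n + t + q"] s q t by (simp add: add_ac)
    qed (use PB_pos[of k] in auto)
    finally show "norm (of_real (Pe k t / fact k) * ph q (Suc k) z (real n + t)) \<le> PB k / fact k * norm (Dk (Suc k) z) * (real n + q) powr (- (Re z + real k + 1))"
      by (simp add: mult.assoc)
  qed
  then show ?thesis by simp
qed

lemma norm_Dk: "norm (Dk k z) \<le> (\<Prod>i<k. norm z + real i)"
  unfolding Dk_def prod_norm[symmetric]
proof (rule prod_mono)
  fix i assume "i \<in> {..<k}"
  have "norm (- z - of_nat i) \<le> norm (- z) + norm (of_nat i :: complex)" by (rule norm_triangle_ineq4)
  then show "0 \<le> norm (- z - of_nat i) \<and> norm (- z - of_nat i) \<le> norm z + real i" by simp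
qed

lemma summable_powr_shift:
  assumes "s > 1" "q > 0"
  shows "summable (\<lambda>n. (real n + q) powr (- s))"
proof (rule summable_comparison_test_ev)
  show "summable (\<lambda>n. real n powr (- s))" using assms summable_real_powr_iff by simp
  show "\<forall>\<^sub>F n in sequentially. norm ((real n + q) powr - s) \<le> real n powr - s"
    using eventually_gt_at_top[of "0::nat"]
  proof eventually_elim
    case (elim n)
    then show ?case using powr_mono2'[of "-s" "real n" "real n + q"] assms by simp
  qed
qed

lemma ph_tendsto:
  assumes "q > 0" "Re z + real k > 0"
  shows "(\<lambda>n. ph q k z (real n)) \<longlonglongrightarrow> 0"
proof -
  have "(\<lambda>n. (real n + q) powr (- (Re z + real k))) \<longlonglongrightarrow> 0"
  proof (rule tendsto_neg_powr)
    have "LIM n sequentially. q + real n :> at_top"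
      by (rule filterlim_tendsto_add_at_top[OF tendsto_const filterlim_real_sequentially])
    then show "LIM n sequentially. real n + q :> at_top" by (simp add: add.commute)
  qed (use assms in simp)
  then have "(\<lambda>n. norm (Dk k z) * (real n + q) powr (- (Re z + real k))) \<longlonglongrightarrow> norm (Dk k z) * 0"
    by (intro tendsto_mult tendsto_const)
  moreover have "norm (ph q k z (real n)) = norm (Dk k z) * (real n + q) powr (- (Re z + real k))" for n
    using assms by (intro norm_ph) simp
  ultimately have "(\<lambda>n. norm (ph q k z (real n))) \<longlonglongrightarrow> 0" by simp
  then show ?thesis by (rule tendsto_norm_zero_cancel)
qed

lemma Cf_summable:
  assumes q: "q > 0" and z: "Re z > - real k"
  shows "summable (\<lambda>n. norm ((-1) ^ n * Cf q k z n))"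
proof (rule summable_comparison_test_ev)
  show "summable (\<lambda>n. PB k / fact k * norm (Dk (Suc k) z) * (real n + q) powr (- (Re z + real k + 1)))"
    by (intro summable_mult summable_powr_shift) (use q z in auto)
  show "\<forall>\<^sub>F n in sequentially. norm (norm ((-1) ^ n * Cf q k z n)) \<le> PB k / fact k * norm (Dk (Suc k) z) * (real n + q) powr (- (Re z + real k + 1))"
    using Cf_bound[OF q] z by (simp add: norm_mult norm_power)
qed

definition SC :: "real \<Rightarrow> nat \<Rightarrow> complex \<Rightarrow> complex" where
  "SC q k z = (\<Sum>n. (-1) ^ n * Cf q k z n)"

lemma SC_step:
  assumes q: "q > 0" and z: "Re z > - real k"
  shows "SC q (Suc k) z + SC q k z = - of_real (eu (Suc k) / fact (Suc k)) * ph q (Suc k) z 0"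
proof -
  let ?c = "of_real (eu (Suc k) / fact (Suc k)) :: complex"
  let ?f = "\<lambda>n. (-1) ^ n * ph q (Suc k) z (real n)"
  have f0: "?f \<longlonglongrightarrow> 0"
  proof -
    have "(\<lambda>n. norm (?f n)) = (\<lambda>n. norm (ph q (Suc k) z (real n)))" by (simp add: norm_mult norm_power)
    moreover have "(\<lambda>n. ph q (Suc k) z (real n)) \<longlonglongrightarrow> 0" by (rule ph_tendsto) (use q z in auto)
    ultimately have "(\<lambda>n. norm (?f n)) \<longlonglongrightarrow> 0" by (simp add: tendsto_norm_zero)
    then show ?thesis by (rule tendsto_norm_zero_cancel)
  qed
  have "(\<lambda>n. ?f (Suc n) - ?f n) sums (0 - ?f 0)" by (rule telescope_sums[OF f0])
  then have A: "(\<lambda>n. ?c * (?f (Suc n) - ?f n)) sums (?c * (0 - ?f 0))" by (rule sums_mult)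
  have s1: "(\<lambda>n. (-1) ^ n * Cf q (Suc k) z n) sums SC q (Suc k) z"
    unfolding SC_def by (rule summable_sums, rule summable_norm_cancel, rule Cf_summable) (use q z in auto)
  have s2: "(\<lambda>n. (-1) ^ n * Cf q k z n) sums SC q k z"
    unfolding SC_def by (rule summable_sums, rule summable_norm_cancel, rule Cf_summable) (use q z in auto)
  have "(\<lambda>n. (-1) ^ n * Cf q (Suc k) z n + (-1) ^ n * Cf q k z n) sums (SC q (Suc k) z + SC q k z)"
    by (rule sums_add[OF s1 s2])
  moreover have "(\<lambda>n. (-1) ^ n * Cf q (Suc k) z n + (-1) ^ n * Cf q k z n) = (\<lambda>n. ?c * (?f (Suc n) - ?f n))"
  proof
    fix n
    have "real (Suc n) = real n + 1" by simp
    then show "(-1) ^ n * Cf q (Suc k) z n + (-1) ^ n * Cf q k z n = ?c * (?f (Suc n) - ?f n)"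
      by (simp only: Cf.simps) (simp add: algebra_simps)
  qed
  ultimately have "(\<lambda>n. ?c * (?f (Suc n) - ?f n)) sums (SC q (Suc k) z + SC q k z)" by simp
  from sums_unique2[OF this A] show ?thesis by simp
qed

definition Fm :: "real \<Rightarrow> nat \<Rightarrow> complex \<Rightarrow> complex" where
  "Fm q M z = (ph q 0 z 0 - (\<Sum>k\<in>{1..M}. (-1) ^ k * of_real (eu k / fact k) * ph q k z 0) - (-1) ^ M * SC q M z) / 2"

lemma Fm_step:
  assumes q: "q > 0" and z: "Re z > - real M"
  shows "Fm q (Suc M) z = Fm q M z"
proof -
  define c where "c = (of_real (eu (Suc M) / fact (Suc M)) :: complex)"
  define A where "A = (\<Sum>k\<in>{1..M}. (-1) ^ k * of_real (eu k / fact k) * ph q k z 0)"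
  have "(\<Sum>k\<in>{1..Suc M}. (-1) ^ k * of_real (eu k / fact k) * ph q k z 0)
     = A + (-1) ^ Suc M * c * ph q (Suc M) z 0"
    by (simp add: A_def c_def)
  moreover have "SC q (Suc M) z = - c * ph q (Suc M) z 0 - SC q M z"
    using SC_step[OF q z] unfolding c_def by (simp add: algebra_simps)
  ultimately have "Fm q (Suc M) z = (ph q 0 z 0 - (A + (-1) ^ Suc M * c * ph q (Suc M) z 0) - (-1) ^ Suc M * (- c * ph q (Suc M) z 0 - SC q M z)) / 2"
    unfolding Fm_def by simp
  also have "\<dots> = (ph q 0 z 0 - A - (-1) ^ M * SC q M z) / 2"
    by (simp add: algebra_simps)
  also have "\<dots> = Fm q M z" by (simp add: Fm_def A_def)
  finally show ?thesis .
qed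

lemma Fm_consistent:
  assumes q: "q > 0" and ab: "a \<le> b" and z: "Re z > - real a"
  shows "Fm q b z = Fm q a z"
  using ab
proof (induction b)
  case 0 then show ?case by simp
next
  case (Suc b)
  show ?case
  proof (cases "a = Suc b")
    case True then show ?thesis by simp
  next
    case False
    then have "a \<le> b" using Suc.prems by simp
    moreover have "Re z > - real b" using z \<open>a \<le> b\<close> by simp
    ultimately show ?thesis using Fm_step[OF q] Suc.IH by simp
  qed
qed

lemma Fm0_sums:
  assumes q: "q > 0" and z: "Re z > 0"
  shows "(\<lambda>n. (-1) ^ n * (complex_of_real (real n + q)) powr (- z)) sums Fm q 0 z"
proof -
  have ph0: "ph q 0 z x = complex_of_real (x + q) powr (- z)" for x by (simp add: ph_def Dk_def)
  have P: "(\<Sum>n<N. (-1) ^ n * ph q 0 z (real n)) = (ph q 0 z 0 - (\<Sum>n<N. (-1) ^ n * Cf q 0 z n) - (-1) ^ N * ph q 0 z (real N)) / 2" for N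
  proof (induction N)
    case 0 then show ?case by simp
  next
    case (Suc N)
    have r: "real (Suc N) = real N + 1" by simp
    show ?case
      unfolding sum.lessThan_Suc Suc.IH Cf.simps r power_Suc
      by (simp add: divide_simps) (simp add: algebra_simps)
  qed
  have "(\<lambda>N. (ph q 0 z 0 - (\<Sum>n<N. (-1) ^ n * Cf q 0 z n) - (-1) ^ N * ph q 0 z (real N)) / 2)
     \<longlonglongrightarrow> (ph q 0 z 0 - SC q 0 z - 0) / 2"
  proof (intro tendsto_intros)
    show "(\<lambda>N. \<Sum>n<N. (-1) ^ n * Cf q 0 z n) \<longlonglongrightarrow> SC q 0 z"
      unfolding SC_def using summable_norm_cancel[OF Cf_summable[OF q, of 0 z]] z
      by (simp add: summable_LIMSEQ)
    have "(\<lambda>N. ph q 0 z (real N)) \<longlonglongrightarrow> 0" by (rule ph_tendsto) (use q z in auto)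
    then have "(\<lambda>N. norm ((-1) ^ N * ph q 0 z (real N))) \<longlonglongrightarrow> 0"
      by (simp add: norm_mult norm_power tendsto_norm_zero)
    then show "(\<lambda>N. (-1) ^ N * ph q 0 z (real N)) \<longlonglongrightarrow> 0"
      by (rule tendsto_norm_zero_cancel)
  qed simp
  then have "(\<lambda>n. (-1) ^ n * ph q 0 z (real n)) sums ((ph q 0 z 0 - SC q 0 z - 0) / 2)"
    unfolding sums_def P .
  then show ?thesis by (simp add: ph0 Fm_def)
qed



lemma ph_exp:
  assumes "x + q > 0"
  shows "(\<lambda>z. ph q k z x) = (\<lambda>z. Dk k z * exp ((- z - of_nat k) * of_real (ln (x + q))))"
proof -
  have ne: "complex_of_real (x + q) \<noteq> 0" using assms by (metis of_real_eq_0_iff less_irrefl)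
  have ln: "Ln (complex_of_real (x + q)) = complex_of_real (ln (x + q))" using assms by (rule Ln_of_real)
  show ?thesis unfolding ph_def powr_def using ne ln by (simp del: of_real_add)
qed

lemma ph_holo: "x + q > 0 \<Longrightarrow> (\<lambda>z. ph q k z x) holomorphic_on S"
  by (subst ph_exp) (auto intro!: holomorphic_intros Dk_holo)

lemma Cf_holo: "q > 0 \<Longrightarrow> (\<lambda>z. Cf q k z n) holomorphic_on S"
proof (induction k)
  case 0
  have a: "(\<lambda>z. ph q 0 z (real n + 1)) holomorphic_on S" "(\<lambda>z. ph q 0 z (real n)) holomorphic_on S"
    using 0 by (auto intro!: ph_holo)
  show ?case by (simp only: Cf.simps) (intro holomorphic_intros a)
next
  case (Suc k)
  have a: "(\<lambda>z. ph q (Suc k) z (real n + 1)) holomorphic_on S" "(\<lambda>z. ph q (Suc k) z (real n)) holomorphic_on S"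
    using Suc by (auto intro!: ph_holo)
  show ?case by (simp only: Cf.simps) (intro holomorphic_intros a Suc.IH Suc.prems)
qed

lemma SC_holo:
  assumes q: "q > 0"
  shows "SC q M holomorphic_on {z. Re z > - real M}"
proof -
  let ?S = "{z. Re z > - real M}"
  have S: "open ?S" by (simp add: open_halfspace_Re_gt)
  let ?f = "\<lambda>n z. (-1) ^ n * Cf q M z n"
  have hf: "?f n holomorphic_on UNIV" for n
    by (intro holomorphic_intros Cf_holo[OF q])
  have hfd: "\<And>n x. x \<in> ?S \<Longrightarrow> (?f n has_field_derivative deriv (?f n) x) (at x)"
    using hf by (auto intro: holomorphic_derivI)
  have "\<exists>g g'. \<forall>x \<in> ?S. ((\<lambda>n. ?f n x) sums g x) \<and> ((\<lambda>n. deriv (?f n) x) sums g' x) \<and> (g has_field_derivative g' x) (at x)"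
  proof (rule series_and_derivative_comparison_complex[OF S hfd])
    fix x assume x: "x \<in> ?S"
    define d where "d = (Re x + real M) / 2"
    have d: "d > 0" using x by (simp add: d_def)
    define K where "K = PB M / fact M * (\<Prod>i<Suc M. norm x + d + real i)"
    define h where "h n = complex_of_real (K * (real n + q) powr (- (1 + d)))" for n
    have K: "K \<ge> 0" unfolding K_def using PB_pos[of M] d
      by (intro mult_nonneg_nonneg divide_nonneg_pos prod_nonneg) auto
    show "\<exists>d h. 0 < d \<and> summable h \<and> range h \<subseteq> \<real>\<^sub>\<ge>\<^sub>0 \<and> (\<forall>\<^sub>F n in sequentially. \<forall>y\<in>ball x d \<inter> ?S. cmod (?f n y) \<le> cmod (h n))"
    proof (intro exI conjI)
      show "0 < d" by (rule d)
      show "summable h" unfolding h_def summable_complex_of_real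
        by (intro summable_mult summable_powr_shift) (use q d in auto)
      show "range h \<subseteq> \<real>\<^sub>\<ge>\<^sub>0" using K by (auto simp: h_def)
      show "\<forall>\<^sub>F n in sequentially. \<forall>y\<in>ball x d \<inter> ?S. cmod (?f n y) \<le> cmod (h n)"
        using eventually_gt_at_top[of "0::nat"]
      proof eventually_elim
        case (elim n)
        show ?case
        proof
          fix y assume y: "y \<in> ball x d \<inter> ?S"
          have dy: "norm (x - y) < d" using y by (simp add: dist_norm)
          have "Re x - Re y \<le> norm (x - y)" using complex_Re_le_cmod[of "x - y"] by simp
          then have ry: "Re y + real M > d" using dy by (simp add: d_def)
          have ny: "norm y \<le> norm x + d" using dy norm_triangle_ineq3[of x y] by (smt (verit) norm_minus_commute norm_triangle_ineq2)
          have "cmod (?f n y) = norm (Cf q M y n)" by (simp add: norm_mult norm_power)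
          also have "\<dots> \<le> PB M / fact M * norm (Dk (Suc M) y) * (real n + q) powr (- (Re y + real M + 1))"
            by (rule Cf_bound[OF q]) (use ry d in simp)
          also have "\<dots> \<le> K * (real n + q) powr (- (1 + d))"
          proof (rule mult_mono)
            have "norm (Dk (Suc M) y) \<le> (\<Prod>i<Suc M. norm x + d + real i)"
              using norm_Dk[of "Suc M" y] prod_mono[of "{..<Suc M}" "\<lambda>i. norm y + real i" "\<lambda>i. norm x + d + real i"] ny
              by force
            then show "PB M / fact M * norm (Dk (Suc M) y) \<le> K"
              unfolding K_def using PB_pos[of M] by (intro mult_left_mono) auto
            show "(real n + q) powr (- (Re y + real M + 1)) \<le> (real n + q) powr (- (1 + d))"
              using elim q ry by (intro powr_mono) auto
          qed (use K in auto)
          also have "\<dots> = cmod (h n)" unfolding h_def norm_of_real using K by simp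
          finally show "cmod (?f n y) \<le> cmod (h n)" .
        qed
      qed
    qed
  qed
  then obtain g g' where g: "\<And>x. x \<in> ?S \<Longrightarrow> ((\<lambda>n. ?f n x) sums g x) \<and> (g has_field_derivative g' x) (at x)"
    by blast
  have eq: "SC q M x = g x" if "x \<in> ?S" for x
    using g[OF that] unfolding SC_def by (simp add: sums_iff)
  show ?thesis
    unfolding holomorphic_on_def
  proof
    fix x assume x: "x \<in> ?S"
    have "(SC q M has_field_derivative g' x) (at x)"
      using has_field_derivative_transform_within_open[of g "g' x" x ?S "SC q M"] g[OF x] eq x S by auto
    then show "SC q M field_differentiable at x within ?S"
      using field_differentiable_at_within field_differentiable_def by blast
  qed
qed

lemma Fm_holo:
  assumes q: "q > 0"
  shows "Fm q M holomorphic_on {z. Re z > - real M}"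
proof -
  have a: "(\<lambda>z. ph q k z 0) holomorphic_on {z. Re z > - real M}" for k
    using q by (intro ph_holo) simp
  show ?thesis unfolding Fm_def
    by (intro holomorphic_intros a SC_holo[OF q]) auto
qed

definition Zf :: "real \<Rightarrow> complex \<Rightarrow> complex" where
  "Zf q z = Fm q (nat \<lceil>- Re z\<rceil> + 1) z"

lemma Zf_eq:
  assumes q: "q > 0" and z: "Re z > - real M"
  shows "Zf q z = Fm q M z"
proof -
  let ?m = "nat \<lceil>- Re z\<rceil> + 1"
  have zm: "Re z > - real ?m" by linarith
  have "Fm q ?m z = Fm q (min M ?m) z" by (rule Fm_consistent[OF q]) (use z zm in \<open>auto simp: min_def\<close>)
  also have "\<dots> = Fm q M z" by (rule sym, rule Fm_consistent[OF q]) (use z zm in \<open>auto simp: min_def\<close>)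
  finally show ?thesis by (simp add: Zf_def)
qed

lemma Zf_holo:
  assumes q: "q > 0"
  shows "Zf q holomorphic_on UNIV"
  unfolding holomorphic_on_def
proof
  fix x :: complex
  let ?m = "nat \<lceil>- Re x\<rceil> + 1"
  let ?S = "{z. Re z > - real ?m}"
  have xS: "x \<in> ?S" by simp linarith
  have S: "open ?S" by (simp add: open_halfspace_Re_gt)
  have "Fm q ?m field_differentiable at x"
    using Fm_holo[OF q, of ?m] xS S holomorphic_on_imp_differentiable_at by blast
  then obtain D where D: "(Fm q ?m has_field_derivative D) (at x)"
    by (auto simp: field_differentiable_def)
  have "(Zf q has_field_derivative D) (at x)"
  proof (rule has_field_derivative_transform_within_open[OF D S xS])
    fix y assume "y \<in> ?S"
    then show "Fm q ?m y = Zf q y" using Zf_eq[OF q, where z=y and M="nat \<lceil>- Re x\<rceil> + 1"] by simp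
  qed
  then show "Zf q field_differentiable at x within UNIV"
    using field_differentiable_def by blast
qed

lemma Zf_sums:
  assumes q: "q > 0" and z: "Re z > 0"
  shows "(\<lambda>n. (-1) ^ n * (complex_of_real (real n + q)) powr (- z)) sums Zf q z"
  using Fm0_sums[OF q z] Zf_eq[OF q, where M=0] z by simp

lemma zetaE_eq:
  assumes q: "q > 0"
  shows "zetaE q = Zf q"
  unfolding zetaE_def
proof (rule the_equality)
  show "Zf q holomorphic_on UNIV \<and> (\<forall>z. 0 < Re z \<longrightarrow> (\<lambda>n. (-1) ^ n * (complex_of_real (real n + q)) powr (- z)) sums Zf q z)"
    using Zf_holo[OF q] Zf_sums[OF q] by blast
  fix f assume f: "f holomorphic_on UNIV \<and> (\<forall>z. 0 < Re z \<longrightarrow> (\<lambda>n. (-1) ^ n * (complex_of_real (real n + q)) powr (- z)) sums f z)"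
  show "f = Zf q"
  proof
    fix w
    have ne: "{z. Re z > 0} \<noteq> {}" using exI[of "\<lambda>z::complex. Re z > 0" 1] by auto
    have eqf: "f z = Zf q z" if "z \<in> {z. Re z > 0}" for z
      using f that Zf_sums[OF q, of z] sums_unique2 by auto
    have hf: "f holomorphic_on UNIV" using f by blast
    show "f w = Zf q w"
      by (rule analytic_continuation_open[of "{z. Re z > 0}" UNIV f "Zf q", OF open_halfspace_Re_gt open_UNIV ne
          connected_UNIV subset_UNIV hf Zf_holo[OF q] eqf]) auto
  qed
qed



definition Main :: "real \<Rightarrow> nat \<Rightarrow> complex \<Rightarrow> complex" where
  "Main q M z = (\<Sum>k\<le>M. of_real (eu k / (2 * fact k)) * Ak q k z)"

lemma Main_holo: "q > 0 \<Longrightarrow> Main q M holomorphic_on S"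
  unfolding Main_def by (intro holomorphic_intros Ak_holo)

lemma sign_eu: "k \<ge> 1 \<Longrightarrow> (-1) ^ k * eu k = - eu k"
  by (cases "even k") (auto simp: eu_even)

lemma Fm_Main:
  assumes q: "q > 0"
  shows "Fm q M z = Main q M z - (-1) ^ M * SC q M z / 2"
proof -
  have php: "ph q k z 0 = Ak q k z" for k by (simp add: ph_def Ak_def)
  have "(\<Sum>k\<in>{1..M}. (-1) ^ k * of_real (eu k / fact k) * ph q k z 0)
      = (\<Sum>k\<in>{1..M}. - (of_real (eu k / fact k) * Ak q k z))"
  proof (rule sum.cong[OF refl])
    fix k assume "k \<in> {1..M}"
    then have "(-1) ^ k * eu k = - eu k" by (intro sign_eu) simp
    then have "(-1) ^ k * complex_of_real (eu k) = - complex_of_real (eu k)"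
      by (metis of_real_minus of_real_mult of_real_neg_numeral of_real_1 of_real_power)
    then show "(-1) ^ k * of_real (eu k / fact k) * ph q k z 0 = - (of_real (eu k / fact k) * Ak q k z)"
      by (simp add: php field_simps)
  qed
  moreover have "(\<Sum>k\<le>M. of_real (eu k / fact k) * Ak q k z) = Ak q 0 z + (\<Sum>k\<in>{1..M}. of_real (eu k / fact k) * Ak q k z)"
  proof -
    have "{..M} = insert 0 {1..M}" by auto
    then show ?thesis by (simp add: eu_0)
  qed
  moreover have "Main q M z = (\<Sum>k\<le>M. of_real (eu k / fact k) * Ak q k z) / 2"
    unfolding Main_def sum_divide_distrib by (rule sum.cong) (auto simp: field_simps)
  ultimately show ?thesis unfolding Fm_def
    by (simp add: php sum_negf field_simps)
qed

lemma higher_deriv_sum_atMost: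
  fixes M :: nat
  assumes "\<And>k. f k holomorphic_on UNIV"
  shows "(deriv ^^ l) (\<lambda>z. \<Sum>k\<le>M. f k z) x = (\<Sum>k\<le>M. (deriv ^^ l) (f k) x)"
proof (induction M)
  case 0 then show ?case by simp
next
  case (Suc M)
  have "(deriv ^^ l) (\<lambda>z. (\<Sum>k\<le>M. f k z) + f (Suc M) z) x = (deriv ^^ l) (\<lambda>z. \<Sum>k\<le>M. f k z) x + (deriv ^^ l) (f (Suc M)) x"
    by (rule higher_deriv_add[of _ UNIV]) (auto intro!: holomorphic_intros assms)
  then show ?case using Suc.IH by simp
qed

definition Ucoef :: "nat \<Rightarrow> nat \<Rightarrow> real \<Rightarrow> real" where
  "Ucoef l k q = eu k / (2 * fact k) * (q powr (- real k - 1) *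
     (\<Sum>j=0..l. real (l choose j) * fact j * real_of_int (stirling1s (Suc k) (Suc j)) * ln q ^ (l - j)))"

lemma Main_deriv:
  assumes q: "q > 0"
  shows "(-1) ^ l * (deriv ^^ l) (Main q M) 1 = of_real (\<Sum>k\<le>M. Ucoef l k q)"
proof -
  have "(deriv ^^ l) (Main q M) 1 = (\<Sum>k\<le>M. (deriv ^^ l) (\<lambda>z. of_real (eu k / (2 * fact k)) * Ak q k z) 1)"
    unfolding Main_def[abs_def] by (rule higher_deriv_sum_atMost) (intro holomorphic_intros Ak_holo q)
  also have "\<dots> = (\<Sum>k\<le>M. of_real (eu k / (2 * fact k)) * (deriv ^^ l) (Ak q k) 1)"
    by (intro sum.cong refl higher_deriv_cmult[of _ UNIV] Ak_holo q) auto
  finally have "(-1) ^ l * (deriv ^^ l) (Main q M) 1 = (\<Sum>k\<le>M. of_real (eu k / (2 * fact k)) * ((-1) ^ l * (deriv ^^ l) (Ak q k) 1))"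
    by (simp add: sum_distrib_left ac_simps)
  also have "\<dots> = of_real (\<Sum>k\<le>M. Ucoef l k q)"
    by (simp add: higher_deriv_Ak[OF q] Ucoef_def)
  finally show ?thesis .
qed



lemma R_bound:
  assumes M: "M \<ge> 1" and q1: "q \<ge> 1" and z: "z \<in> ball 1 (1/2)"
  shows "norm (Zf q z - Main q M z) \<le>
     PB M / fact M * (\<Prod>i<Suc M. 2 + real i) * (\<Sum>n. (real n + 1) powr (- 2)) * q powr (- (real M - 1/2)) / 2"
proof -
  have q: "q > 0" using q1 by simp
  have dz: "norm (1 - z) < 1/2" using z by (simp add: dist_norm)
  have "\<bar>Re (1 - z)\<bar> \<le> norm (1 - z)" by (rule abs_Re_le_cmod)
  then have rz: "Re z > 1/2" using dz by simp
  have nz: "norm z \<le> 2" using dz norm_triangle_ineq2[of z 1] by (simp add: norm_minus_commute)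
  define KD where "KD = (\<Prod>i<Suc M. 2 + real i)"
  define qp where "qp = q powr (- (real M - 1/2))"
  define Z2 where "Z2 = (\<Sum>n. (real n + 1) powr (- 2))"
  have sZ2: "summable (\<lambda>n. (real n + 1) powr (- 2))" by (rule summable_powr_shift) auto
  have KDp: "0 \<le> PB M / fact M * KD" unfolding KD_def using PB_pos[of M]
    by (intro mult_nonneg_nonneg divide_nonneg_pos prod_nonneg) auto
  have zM: "Re z > - real M" using rz by simp
  have "Zf q z - Main q M z = - ((-1) ^ M * SC q M z / 2)"
    using Zf_eq[OF q zM] Fm_Main[OF q] by simp
  then have "norm (Zf q z - Main q M z) = norm (SC q M z) / 2"
    by (simp add: norm_mult norm_divide norm_power)
  also have "norm (SC q M z) \<le> (\<Sum>n. norm ((-1) ^ n * Cf q M z n))"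
    unfolding SC_def by (rule summable_norm[OF Cf_summable[OF q zM]])
  also have "\<dots> \<le> (\<Sum>n. PB M / fact M * KD * qp * (real n + 1) powr (- 2))"
  proof (rule suminf_le)
    show "summable (\<lambda>n. norm ((-1) ^ n * Cf q M z n))" by (rule Cf_summable[OF q zM])
    show "summable (\<lambda>n. PB M / fact M * KD * qp * (real n + 1) powr (- 2))"
      by (rule summable_mult[OF sZ2])
    fix n
    have "norm ((-1) ^ n * Cf q M z n) = norm (Cf q M z n)" by (simp add: norm_mult norm_power)
    also have "\<dots> \<le> PB M / fact M * norm (Dk (Suc M) z) * (real n + q) powr (- (Re z + real M + 1))"
      by (rule Cf_bound[OF q]) (use rz in simp)
    also have "\<dots> \<le> PB M / fact M * KD * (qp * (real n + 1) powr (- 2))"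
    proof (rule mult_mono)
      have "norm (Dk (Suc M) z) \<le> KD"
        using norm_Dk[of "Suc M" z] prod_mono[of "{..<Suc M}" "\<lambda>i. norm z + real i" "\<lambda>i. 2 + real i"] nz
        unfolding KD_def by force
      then show "PB M / fact M * norm (Dk (Suc M) z) \<le> PB M / fact M * KD"
        using PB_pos[of M] by (intro mult_left_mono) auto
      have "(real n + q) powr (- (Re z + real M + 1)) \<le> (real n + q) powr (- (real M - 1/2) + - 2)"
        using rz q1 by (intro powr_mono) auto
      also have "\<dots> = (real n + q) powr (- (real M - 1/2)) * (real n + q) powr (- 2)"
        by (rule powr_add)
      also have "\<dots> \<le> qp * (real n + 1) powr (- 2)"
        unfolding qp_def
        by (intro mult_mono powr_mono2') (use q1 M in auto)
      finally show "(real n + q) powr (- (Re z + real M + 1)) \<le> qp * (real n + 1) powr (- 2)" .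
    qed (use KDp in auto)
    finally show "norm ((-1) ^ n * Cf q M z n) \<le> PB M / fact M * KD * qp * (real n + 1) powr (- 2)"
      by (simp add: mult.assoc)
  qed
  also have "\<dots> = PB M / fact M * KD * qp * Z2"
    unfolding Z2_def by (rule suminf_mult[OF sZ2])
  finally have "norm (Zf q z - Main q M z) \<le> PB M / fact M * KD * qp * Z2 / 2"
    by (simp add: divide_right_mono)
  then show ?thesis by (simp add: KD_def qp_def Z2_def ac_simps)
qed

lemma expansion:
  assumes M: "M \<ge> 1"
  shows "\<exists>C. \<forall>q\<ge>1. norm (mod_stieltjes l q - of_real (\<Sum>k\<le>M. Ucoef l k q)) \<le> C * q powr (- (real M - 1/2))"
proof -
  define G where "G = PB M / fact M * (\<Prod>i<Suc M. 2 + real i) * (\<Sum>n. (real n + 1) powr (- 2))"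
  have sZ2: "summable (\<lambda>n. (real n + 1) powr (- 2))" by (rule summable_powr_shift) auto
  have Z2: "(\<Sum>n. (real n + 1) powr (- 2)) > 0"
    by (rule suminf_pos[OF sZ2]) simp
  have G: "G > 0" unfolding G_def using PB_pos[of M] Z2
    by (intro mult_pos_pos divide_pos_pos prod_pos) auto
  show ?thesis
  proof (intro exI allI impI)
    fix q :: real assume q1: "q \<ge> 1"
    then have q: "q > 0" by simp
    define qp where "qp = q powr (- (real M - 1/2))"
    have qp: "qp > 0" using q by (simp add: qp_def)
    define R where "R = (\<lambda>z. Zf q z - Main q M z)"
    have Rh: "R holomorphic_on UNIV" unfolding R_def
      by (intro holomorphic_intros Zf_holo[OF q] Main_holo[OF q])
    have Rb: "norm (R z) \<le> G * qp / 2" if "z \<in> ball 1 (1/2)" for z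
      using R_bound[OF M q1 that] by (simp add: R_def G_def qp_def)
    have zE: "zetaE q = (\<lambda>z. Main q M z + R z)" by (simp add: zetaE_eq[OF q] R_def fun_eq_iff)
    have "(deriv ^^ l) (zetaE q) 1 = (deriv ^^ l) (Main q M) 1 + (deriv ^^ l) R 1"
      unfolding zE by (rule higher_deriv_add[OF Main_holo[OF q] Rh]) auto
    then have "mod_stieltjes l q = of_real (\<Sum>k\<le>M. Ucoef l k q) + (-1) ^ l * (deriv ^^ l) R 1"
      using Main_deriv[OF q, of l M] by (simp add: mod_stieltjes_def algebra_simps)
    then have "norm (mod_stieltjes l q - of_real (\<Sum>k\<le>M. Ucoef l k q)) = norm ((deriv ^^ l) R 1)"
      by (simp add: norm_mult norm_power)
    also have "\<dots> \<le> fact l * 2 ^ l * G * qp"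
    proof (cases "l = 0")
      case True
      have "G * qp > 0" using G qp by simp
      moreover have "norm (R 1) \<le> G * qp / 2" using Rb[of 1] by simp
      ultimately show ?thesis using True by simp
    next
      case False
      have "norm ((deriv ^^ l) R 1) \<le> fact l * (G * qp) / (1/2) ^ l"
      proof (rule Cauchy_higher_deriv_bound[where y=0])
        show "R holomorphic_on ball 1 (1/2)" using Rh by (rule holomorphic_on_subset) auto
        show "continuous_on (cball 1 (1/2)) R"
          using holomorphic_on_imp_continuous_on[OF Rh] by (rule continuous_on_subset) auto
        fix w assume "w \<in> ball (1::complex) (1/2)"
        then have "norm (R w) \<le> G * qp / 2" by (rule Rb)
        moreover have "G * qp > 0" using G qp by simp
        ultimately have "norm (R w) < G * qp" by simp
        then show "R w \<in> ball 0 (G * qp)" by (simp add: dist_norm)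
      qed (use False in auto)
      then show ?thesis by (simp add: field_simps)
    qed
    finally show "norm (mod_stieltjes l q - of_real (\<Sum>k\<le>M. Ucoef l k q)) \<le> fact l * 2 ^ l * G * q powr (- (real M - 1/2))"
      by (simp add: qp_def)
  qed
qed



definition Tm :: "nat \<Rightarrow> nat \<Rightarrow> real \<Rightarrow> real" where
  "Tm l = (\<lambda>(n::nat) (q::real).
    if n = 0 then ln q ^ l / (2 * q)
    else if n = 1 then - (real l * ln q ^ (l - 1) - ln q ^ l) / (4 * q ^ 2)
    else euler_poly (2 * (n - 1) + 1) 0 / (2 * q ^ (2 * (n - 1) + 2) * fact (2 * (n - 1) + 1)) *
         (\<Sum>j = 0..l. real (l choose j) * fact j * real_of_int (stirling1s (2 * (n - 1) + 2) (j + 1))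
                       * ln q ^ (l - j)))"

definition kk :: "nat \<Rightarrow> nat" where "kk n = (if n = 0 then 0 else 2 * n - 1)"

lemma stir1: "stirling1s (Suc 0) k = (if k = Suc 0 then 1 else 0)"
  using stir_Suc[of 0 k] by (simp add: stir_0)
lemma stir2: "stirling1s (Suc (Suc 0)) k = (if k = Suc 0 then -1 else if k = Suc (Suc 0) then 1 else 0)"
  using stir_Suc[of "Suc 0" k] by (auto simp: stir1)

lemma powr_neg_nat: "q > 0 \<Longrightarrow> q powr (- real k - 1) = 1 / q ^ Suc k"
proof -
  assume q: "q > 0"
  have "q powr (- real k - 1) = q powr (- real (Suc k))" by (rule arg_cong[where f="\<lambda>x. q powr x"]) simp
  also have "\<dots> = inverse (q powr real (Suc k))" by (rule powr_minus)
  also have "\<dots> = 1 / q ^ Suc k" by (simp only: powr_realpow[OF q] inverse_eq_divide)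
  finally show ?thesis .
qed

lemma Tm_Ucoef:
  assumes q: "q > 0"
  shows "Tm l n q = Ucoef l (kk n) q"
proof -
  consider "n = 0" | "n = 1" | "n \<ge> 2" by linarith
  then show ?thesis
  proof cases
    case 1
    have "(\<Sum>j = 0..l. real (l choose j) * fact j * real_of_int (stirling1s (Suc 0) (Suc j)) * ln q ^ (l - j))
        = (\<Sum>j = 0..l. (if j = 0 then ln q ^ l else 0))"
      by (rule sum.cong) (auto simp: stir1)
    also have "\<dots> = ln q ^ l" by simp
    finally show ?thesis using 1 q by (simp add: Tm_def Ucoef_def kk_def eu_0 powr_neg_nat)
  next
    case 2
    have "(\<Sum>j = 0..l. real (l choose j) * fact j * real_of_int (stirling1s (Suc (Suc 0)) (Suc j)) * ln q ^ (l - j))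
        = (\<Sum>j = 0..l. (if j = 0 then (- (ln q ^ l)) else 0)) + (\<Sum>j = 0..l. (if j = 1 then real l * ln q ^ (l - 1) else 0))"
      unfolding sum.distrib[symmetric]
      by (rule sum.cong) (auto simp: stir2)
    also have "\<dots> = - (ln q ^ l) + real l * ln q ^ (l - 1)" by (cases l) auto
    finally have S: "(\<Sum>j = 0..l. real (l choose j) * fact j * real_of_int (stirling1s (Suc (Suc 0)) (Suc j)) * ln q ^ (l - j))
        = - (ln q ^ l) + real l * ln q ^ (l - 1)" .
    have k1: "kk n = Suc 0" using 2 by (simp add: kk_def)
    have "Ucoef l (kk n) q = eu (Suc 0) / (2 * fact (Suc 0)) * (q powr (- real (Suc 0) - 1) * (- (ln q ^ l) + real l * ln q ^ (l - 1)))"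
      unfolding k1 Ucoef_def S[symmetric] by (simp only: of_nat_Suc)
    also have "\<dots> = Tm l n q"
    proof -
      have p2: "q powr (- real (Suc 0) - 1) = 1 / q ^ 2" using powr_neg_nat[OF q, of "Suc 0"] by (simp add: numeral_2_eq_2)
      have e1: "eu (Suc 0) = -1/2" using eu_1 by simp
      show ?thesis using 2 q unfolding p2 by (simp add: Tm_def e1 field_simps)
    qed
    finally show ?thesis by simp
  next
    case 3
    define m where "m = 2 * (n - 1) + 1"
    define e where "e = 2 * (n - 1) + 2"
    have k: "kk n = m" using 3 by (simp add: kk_def m_def)
    have sm: "Suc m = e" by (simp add: m_def e_def)
    have j1: "\<And>j::nat. j + 1 = Suc j" by simp
    have "Ucoef l (kk n) q = eu m / (2 * fact m) * (1 / q ^ e *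
        (\<Sum>j = 0..l. real (l choose j) * fact j * real_of_int (stirling1s e (Suc j)) * ln q ^ (l - j)))"
      unfolding k Ucoef_def powr_neg_nat[OF q] sm ..
    also have "\<dots> = euler_poly m 0 / (2 * q ^ e * fact m) *
        (\<Sum>j = 0..l. real (l choose j) * fact j * real_of_int (stirling1s e (j + 1)) * ln q ^ (l - j))"
      unfolding euler_poly_0 j1 using q by (simp add: field_simps)
    also have "\<dots> = Tm l n q"
      using 3 unfolding Tm_def m_def e_def by simp
    finally show ?thesis by simp
  qed
qed

lemma Ucoef_even: "k \<ge> 1 \<Longrightarrow> even k \<Longrightarrow> Ucoef l k q = 0"
  by (simp add: Ucoef_def eu_even)

lemma sum_Ucoef_Tm:
  assumes q: "q > 0"
  shows "(\<Sum>k\<le>2 * N + 2. Ucoef l k q) = (\<Sum>n<N + 2. Tm l n q)"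
proof (induction N)
  case 0
  have "(\<Sum>k\<le>2. Ucoef l k q) = Ucoef l 0 q + Ucoef l 1 q + Ucoef l 2 q"
    by (simp add: numeral_2_eq_2)
  also have "\<dots> = Tm l 0 q + Tm l 1 q"
    using Tm_Ucoef[OF q, of l 0] Tm_Ucoef[OF q, of l 1] Ucoef_even[of 2 l q] by (simp add: kk_def)
  finally show ?case by (simp add: numeral_2_eq_2)
next
  case (Suc N)
  have e: "2 * Suc N + 2 = Suc (Suc (2 * N + 2))" by simp
  have "(\<Sum>k\<le>2 * Suc N + 2. Ucoef l k q) = (\<Sum>k\<le>2 * N + 2. Ucoef l k q) + Ucoef l (Suc (2 * N + 2)) q + Ucoef l (Suc (Suc (2 * N + 2))) q"
    unfolding e by simp
  also have "Ucoef l (Suc (Suc (2 * N + 2))) q = 0" by (rule Ucoef_even) auto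
  also have "Ucoef l (Suc (2 * N + 2)) q = Tm l (N + 2) q"
  proof -
    have "kk (N + 2) = Suc (2 * N + 2)" by (simp add: kk_def)
    then show ?thesis using Tm_Ucoef[OF q, of l "N + 2"] by simp
  qed
  finally show ?case using Suc.IH by simp
qed

lemma stir_Suc_1: "stirling1s (Suc n) (Suc 0) = (-1) ^ n * fact n"
proof (induction n)
  case 0 then show ?case by (simp add: stir1)
next
  case (Suc n)
  then show ?case using stir_Suc[of "Suc n" "Suc 0"] stir_Suc_0[of n] by (simp add: algebra_simps)
qed

definition Sk :: "nat \<Rightarrow> nat \<Rightarrow> real \<Rightarrow> real" where
  "Sk l k q = (\<Sum>j=0..l. real (l choose j) * fact j * real_of_int (stirling1s (Suc k) (Suc j)) * ln q ^ (l - j))"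

lemma Sk_lim: "((\<lambda>q. Sk l k q / ln q ^ l) \<longlongrightarrow> real_of_int (stirling1s (Suc k) (Suc 0))) at_top"
proof -
  let ?c = "\<lambda>j. real (l choose j) * fact j * real_of_int (stirling1s (Suc k) (Suc j))"
  have ev: "eventually (\<lambda>q. (\<Sum>j=0..l. ?c j * inverse (ln q) ^ j) = Sk l k q / ln q ^ l) at_top"
    using eventually_gt_at_top[of "1::real"]
  proof eventually_elim
    case (elim q)
    then have lq: "ln q > 0" by simp
    have "Sk l k q / ln q ^ l = (\<Sum>j=0..l. ?c j * (ln q ^ (l - j) / ln q ^ l))"
      unfolding Sk_def sum_divide_distrib by (simp add: mult.assoc)
    also have "\<dots> = (\<Sum>j=0..l. ?c j * inverse (ln q) ^ j)"
    proof (rule sum.cong[OF refl])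
      fix j assume "j \<in> {0..l}"
      then have "l = (l - j) + j" by simp
      then have "ln q ^ l = ln q ^ (l - j) * ln q ^ j" by (metis power_add)
      then have "ln q ^ (l - j) / ln q ^ l = inverse (ln q) ^ j" using lq
        by (simp add: field_simps power_inverse)
      then show "?c j * (ln q ^ (l - j) / ln q ^ l) = ?c j * inverse (ln q) ^ j" by simp
    qed
    finally show ?case by simp
  qed
  have "((\<lambda>q. \<Sum>j=0..l. ?c j * inverse (ln q) ^ j) \<longlongrightarrow> (\<Sum>j=0..l. ?c j * 0 ^ j)) at_top"
    by (intro tendsto_intros tendsto_inverse_0_at_top ln_at_top)
  moreover have "(\<Sum>j=0..l. ?c j * 0 ^ j) = (\<Sum>j=0..l. (if j = 0 then ?c 0 else 0))"
    by (rule sum.cong) auto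
  ultimately have "((\<lambda>q. \<Sum>j=0..l. ?c j * inverse (ln q) ^ j) \<longlongrightarrow> ?c 0) at_top" by simp
  then have "((\<lambda>q. Sk l k q / ln q ^ l) \<longlongrightarrow> ?c 0) at_top" by (rule Lim_transform_eventually[OF _ ev])
  then show ?thesis by simp
qed

definition pp :: "nat \<Rightarrow> real" where "pp n = (if n = 0 then 1 else 2 * real n)"

lemma Tm_theta: "Tm l N \<in> \<Theta>[at_top](\<lambda>q. ln q ^ l * q powr (- pp N))"
proof -
  let ?k = "kk N"
  let ?c = "eu ?k / (2 * fact ?k)"
  have kp: "- real ?k - 1 = - pp N" by (cases "N = 0") (auto simp: kk_def pp_def)
  have nz: "eu ?k \<noteq> 0"
  proof (cases "N = 0")
    case True then show ?thesis by (simp add: kk_def eu_0)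
  next
    case False then have "odd ?k" by (simp add: kk_def)
    then show ?thesis by (rule eu_odd_nz)
  qed
  have ev: "eventually (\<lambda>q. ?c * (Sk l ?k q / ln q ^ l) = Tm l N q / (ln q ^ l * q powr (- pp N))) at_top"
    using eventually_gt_at_top[of "1::real"]
  proof eventually_elim
    case (elim q)
    then have q: "q > 0" and lq: "ln q > 0" by auto
    show ?case using q lq
      by (simp add: Tm_Ucoef[OF q] Ucoef_def kp Sk_def)
  qed
  have "((\<lambda>q. ?c * (Sk l ?k q / ln q ^ l)) \<longlongrightarrow> ?c * real_of_int (stirling1s (Suc ?k) (Suc 0))) at_top"
    by (intro tendsto_intros Sk_lim)
  then have "((\<lambda>q. Tm l N q / (ln q ^ l * q powr (- pp N))) \<longlongrightarrow> ?c * real_of_int (stirling1s (Suc ?k) (Suc 0))) at_top"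
    by (rule Lim_transform_eventually[OF _ ev])
  moreover have "?c * real_of_int (stirling1s (Suc ?k) (Suc 0)) \<noteq> 0"
    using nz by (simp add: stir_Suc_1)
  ultimately show ?thesis by (intro bigthetaI_tendsto) auto
qed

lemma W_small:
  fixes a b :: real
  assumes "a < b"
  shows "(\<lambda>q. ln q ^ l * q powr (- b)) \<in> o[at_top](\<lambda>q. ln q ^ l * q powr (- a))"
proof -
  have "(\<lambda>q::real. q powr (- b)) \<in> o[at_top](\<lambda>q::real. q powr (- a))"
    using powr_smallo_iff[of "\<lambda>x::real. x" at_top "- b" "- a"] assms by (simp add: filterlim_ident)
  then show ?thesis by (rule landau_o.small.mult_left)
qed

lemma powr_big_W: "(\<lambda>q::real. q powr (- a)) \<in> O[at_top](\<lambda>q. ln q ^ l * q powr (- a))"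
proof (rule bigoI[where c=1])
  show "\<forall>\<^sub>F q in at_top. norm ((q::real) powr - a) \<le> 1 * norm (ln q ^ l * q powr - a)"
    using eventually_ge_at_top[of "exp 1"]
  proof eventually_elim
    case (elim q)
    then have q: "q > 0" by (smt (verit) exp_gt_zero)
    have "ln q \<ge> 1" using elim q by (metis ln_exp ln_le_cancel_iff exp_gt_zero)
    then have "1 \<le> ln q ^ l" by (simp add: one_le_power)
    then have "q powr - a \<le> ln q ^ l * q powr - a" using q by (simp add: mult_le_cancel_right1)
    then show ?case using q \<open>1 \<le> ln q ^ l\<close> by simp
  qed
qed



theorem theorem3p17:
  fixes l :: nat
  defines "T \<equiv> \<lambda>(n::nat) (q::real).
    if n = 0 then ln q ^ l / (2 * q)
    else if n = 1 then - (real l * ln q ^ (l - 1) - ln q ^ l) / (4 * q ^ 2)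
    else euler_poly (2 * (n - 1) + 1) 0 / (2 * q ^ (2 * (n - 1) + 2) * fact (2 * (n - 1) + 1)) *
         (\<Sum>j = 0..l. real (l choose j) * fact j * real_of_int (stirling1s (2 * (n - 1) + 2) (j + 1))
                       * ln q ^ (l - j))"
  shows "\<forall>N. (\<lambda>q. mod_stieltjes l q - complex_of_real (\<Sum>n<N. T n q))
              \<in> O[at_top](\<lambda>q. complex_of_real (T N q))"
proof
  fix N :: nat
  have TT: "T = Tm l" by (simp only: T_def Tm_def)
  obtain C0 where C0: "\<And>q. q \<ge> 1 \<Longrightarrow> norm (mod_stieltjes l q - of_real (\<Sum>k\<le>2 * N + 2. Ucoef l k q)) \<le> C0 * q powr (- (real (2 * N + 2) - 1/2))"
    using expansion[of "2 * N + 2" l] by auto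
  define C where "C = \<bar>C0\<bar> + 1"
  have Cp: "C > 0" by (simp add: C_def)
  define e where "e = 2 * real N + 3/2"
  have ee: "- (real (2 * N + 2) - 1/2) = - e" by (simp add: e_def)
  define h where "h q = \<bar>Tm l N q\<bar> + \<bar>Tm l (N + 1) q\<bar> + C * q powr (- e)" for q
  have bound: "norm (mod_stieltjes l q - of_real (\<Sum>n<N. Tm l n q)) \<le> h q" if q1: "q \<ge> 1" for q
  proof -
    have q: "q > 0" using q1 by simp
    have "(\<Sum>k\<le>2 * N + 2. Ucoef l k q) = (\<Sum>n<N + 2. Tm l n q)" by (rule sum_Ucoef_Tm[OF q])
    also have "\<dots> = (\<Sum>n<N. Tm l n q) + Tm l N q + Tm l (N + 1) q" by simp
    finally have S: "(\<Sum>k\<le>2 * N + 2. Ucoef l k q) = (\<Sum>n<N. Tm l n q) + Tm l N q + Tm l (N + 1) q" .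
    have "norm (mod_stieltjes l q - of_real (\<Sum>n<N. Tm l n q))
        \<le> norm (mod_stieltjes l q - of_real (\<Sum>k\<le>2 * N + 2. Ucoef l k q)) + norm (complex_of_real (Tm l N q + Tm l (N + 1) q))"
      unfolding S by (rule order_trans[OF _ norm_triangle_ineq]) (simp add: algebra_simps)
    also have "\<dots> \<le> C0 * q powr (- e) + (\<bar>Tm l N q\<bar> + \<bar>Tm l (N + 1) q\<bar>)"
    proof (rule add_mono)
      show "norm (mod_stieltjes l q - of_real (\<Sum>k\<le>2 * N + 2. Ucoef l k q)) \<le> C0 * q powr (- e)"
        using C0[OF q1] unfolding ee .
      show "norm (complex_of_real (Tm l N q + Tm l (N + 1) q)) \<le> \<bar>Tm l N q\<bar> + \<bar>Tm l (N + 1) q\<bar>"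
        by (simp only: norm_of_real abs_triangle_ineq)
    qed
    also have "\<dots> \<le> h q"
    proof -
      have p: "q powr (- e) > 0" using q by simp
      have "C0 * q powr (- e) \<le> \<bar>C0\<bar> * q powr (- e)" using p by (intro mult_right_mono) auto
      also have "\<dots> \<le> C * q powr (- e)" unfolding C_def using p by (simp add: distrib_right)
      finally show ?thesis unfolding h_def by simp
    qed
    finally show ?thesis .
  qed
  have hO: "h \<in> O[at_top](Tm l N)"
  proof -
    have th: "\<And>n. Tm l n \<in> \<Theta>[at_top](\<lambda>q. ln q ^ l * q powr (- pp n))" by (rule Tm_theta)
    have bk: "(\<lambda>q. ln q ^ l * q powr (- pp N)) \<in> O[at_top](Tm l N)"
      using th[of N] by (simp add: bigtheta_sym bigthetaD1)
    have a1: "(\<lambda>q. \<bar>Tm l N q\<bar>) \<in> O[at_top](Tm l N)" by simp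
    have a2: "(\<lambda>q. \<bar>Tm l (N + 1) q\<bar>) \<in> O[at_top](Tm l N)"
    proof -
      have "Tm l (N + 1) \<in> O[at_top](\<lambda>q. ln q ^ l * q powr (- pp (N + 1)))" using th[of "N+1"] by blast
      moreover have "(\<lambda>q. ln q ^ l * q powr (- pp (N + 1))) \<in> o[at_top](\<lambda>q. ln q ^ l * q powr (- pp N))"
        by (rule W_small) (simp add: pp_def)
      ultimately have "Tm l (N + 1) \<in> o[at_top](\<lambda>q. ln q ^ l * q powr (- pp N))"
        by (rule landau_o.big_small_trans)
      then have "Tm l (N + 1) \<in> O[at_top](Tm l N)"
        by (rule landau_o.small_big_trans'[OF _ bk])
      then show ?thesis by simp
    qed
    have a3: "(\<lambda>q. C * q powr (- e)) \<in> O[at_top](Tm l N)"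
    proof -
      have "(\<lambda>q::real. q powr (- e)) \<in> o[at_top](\<lambda>q::real. q powr (- pp N))"
        using powr_smallo_iff[of "\<lambda>x::real. x" at_top "- e" "- pp N"]
        by (simp add: filterlim_ident e_def pp_def)
      then have "(\<lambda>q::real. q powr (- e)) \<in> o[at_top](\<lambda>q. ln q ^ l * q powr (- pp N))"
        by (rule landau_o.small_big_trans[OF _ powr_big_W])
      then have "(\<lambda>q::real. q powr (- e)) \<in> O[at_top](Tm l N)"
        by (rule landau_o.small_big_trans'[OF _ bk])
      then show ?thesis using Cp by simp
    qed
    show ?thesis unfolding h_def[abs_def]
      by (intro sum_in_bigo a1 a2 a3)
  qed
  then obtain c where c: "c > 0" "eventually (\<lambda>q. norm (h q) \<le> c * norm (Tm l N q)) at_top"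
    by (elim landau_o.bigE)
  show "(\<lambda>q. mod_stieltjes l q - complex_of_real (\<Sum>n<N. T n q)) \<in> O[at_top](\<lambda>q. complex_of_real (T N q))"
    unfolding TT
  proof (rule bigoI[where c=c])
    show "\<forall>\<^sub>F q in at_top. norm (mod_stieltjes l q - complex_of_real (\<Sum>n<N. Tm l n q)) \<le> c * norm (complex_of_real (Tm l N q))"
      using c(2) eventually_ge_at_top[of "1::real"]
    proof eventually_elim
      case (elim q)
      have "norm (mod_stieltjes l q - complex_of_real (\<Sum>n<N. Tm l n q)) \<le> h q" by (rule bound[OF elim(2)])
      also have "\<dots> \<le> norm (h q)" by simp
      also have "\<dots> \<le> c * norm (Tm l N q)" by (rule elim(1))
      finally show ?case by simp
    qed
  qed
qed


end
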